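(* Let $n\in\mathbb{N}$, $n\neq1$, and let $f\colon\mathbb{R}\to\mathbb{R}$ be an additive function. Define $\phi\colon\mathbb{R}\to\mathbb{R}$ by $\phi(x)=f(x^{n})-f(x)^{n}$. Assume that $\phi$ is locally regular on $\mathbb{R}$. Then $f$ is linear, i.e. $f(x)=f(1)x$ for all $x\in\mathbb{R}$.
   Context: $\mathbb{N}$ denotes the set of positive integers. A function $f\colon\mathbb{R}\to\mathbb{R}$ is additive if $f(x+y)=f(x)+f(y)$ for all $x,y\in\mathbb{R}$. A real function defined on a subset of $\mathbb{R}$ is called locally regular on its domain if at least one of the following holds: (i) it is bounded on a (Lebesgue) measurable subset of its domain of positive measure; (ii) it is continuous at some point of its domain; (iii) there is a subset of its domain of positive Lebesgue measure on which its restriction is Lebesgue measurable. *)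

theory Defs
  imports "HOL-Analysis.Analysis"
begin

definition additive_fun :: "(real \<Rightarrow> real) \<Rightarrow> bool" where
  "additive_fun f \<longleftrightarrow> (\<forall>x y. f (x + y) = f x + f y)"

definition locally_regular :: "(real \<Rightarrow> real) \<Rightarrow> real set \<Rightarrow> bool" where
  "locally_regular g D \<longleftrightarrow>
     (\<exists>A. A \<subseteq> D \<and> A \<in> sets lebesgue \<and> emeasure lebesgue A > 0 \<and> bounded (g ` A))
   \<or> (\<exists>x\<in>D. continuous (at x within D) g)
   \<or> (\<exists>A. A \<subseteq> D \<and> A \<in> sets lebesgue \<and> emeasure lebesgue A > 0 \<and>
          g \<in> borel_measurable (restrict_space lebesgue A))"

end

theory Submission
  imports Defs "HOL-Computational_Algebra.Polynomial"
begin


lemma add_0: "additive_fun f \<Longrightarrow> f 0 = 0"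
  unfolding additive_fun_def by (metis add.right_neutral add_left_cancel)

lemma add_neg: "additive_fun f \<Longrightarrow> f (- x) = - f x"
  using add_0[of f] unfolding additive_fun_def by (metis add.right_inverse add_eq_0_iff)

lemma add_plus: "additive_fun f \<Longrightarrow> f (x + y) = f x + f y"
  unfolding additive_fun_def by blast

lemma add_diff: "additive_fun f \<Longrightarrow> f (x - y) = f x - f y"
  using add_neg[of f] add_plus[of f] by (metis diff_conv_add_uminus)

lemma add_nat: "additive_fun f \<Longrightarrow> f (of_nat N * x) = of_nat N * f x"
proof (induction N)
  case 0 then show ?case using add_0 by simp
next
  case (Suc N)
  have "f (of_nat (Suc N) * x) = f (of_nat N * x + x)" by (simp add: algebra_simps)
  also have "\<dots> = of_nat N * f x + f x" using Suc add_plus[of f] by simp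
  finally show ?case by (simp add: algebra_simps)
qed

lemma add_int: "additive_fun f \<Longrightarrow> f (of_int k * x) = of_int k * f x"
proof (cases "k \<ge> 0")
  case True
  assume a: "additive_fun f"
  then show ?thesis using True add_nat[OF a, of "nat k" x] by simp
next
  case False
  assume a: "additive_fun f"
  have "f (of_int k * x) = f (- (of_nat (nat (-k)) * x))" using False by simp
  also have "\<dots> = - (of_nat (nat (-k)) * f x)" using add_neg[OF a] add_nat[OF a] by simp
  finally show ?thesis using False by simp
qed

lemma add_rat: assumes a: "additive_fun f" and q: "q \<in> \<rat>" shows "f (q * x) = q * f x"
proof -
  obtain i j where ij: "j > 0" "q = of_int i / of_int j" using q by (auto elim: Rats_cases')
  have "of_int j * f (q * x) = f (of_int j * (q * x))" using add_int[OF a] by simp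
  also have "of_int j * (q * x) = of_int i * x" using ij by simp
  also have "f \<dots> = of_int i * f x" using add_int[OF a] by simp
  finally have e: "of_int j * f (q * x) = of_int i * f x" .
  have jne: "(of_int j :: real) \<noteq> 0" using ij by simp
  have "f (q * x) = (of_int j * f (q * x)) / of_int j" using jne by simp
  also have "\<dots> = of_int i * f x / of_int j" using e by simp
  also have "\<dots> = q * f x" using ij(2) by simp
  finally show ?thesis .
qed

lemma add_rat1: assumes a: "additive_fun f" and q: "q \<in> \<rat>" shows "f q = q * f 1"
  using add_rat[OF a q, of 1] by simp

lemma add_sum: assumes a: "additive_fun f" and "finite S" shows "f (sum u S) = (\<Sum>i\<in>S. f (u i))"
  using assms(2) by (induction S rule: finite_induct) (auto simp: add_0[OF a] add_plus[OF a])

lemma generic_zero: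
  fixes F :: "real \<Rightarrow> real"
  assumes k: "k \<ge> 1"
    and per: "\<And>x q. q \<in> \<rat> \<Longrightarrow> F (x + q) = F x"
    and hom: "\<And>x N. F (of_nat N * x) = of_nat N ^ k * F x"
    and d: "d > 0" and bnd: "\<And>t. \<bar>t\<bar> < d \<Longrightarrow> \<bar>F t\<bar> \<le> K"
  shows "F x = 0"
proof -
  have gb: "\<bar>F y\<bar> \<le> K" for y
  proof -
    obtain q where q: "q \<in> \<rat>" "y - d < q" "q < y" using Rats_dense_in_real[of "y - d" y] d by auto
    have "F y = F ((y - q) + q)" by simp
    also have "\<dots> = F (y - q)" using per q by blast
    finally show ?thesis using bnd[of "y - q"] q by simp
  qed
  show ?thesis
  proof (rule ccontr)
    assume nz: "F x \<noteq> 0"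
    obtain N :: nat where N: "K / \<bar>F x\<bar> < of_nat N" using reals_Archimedean2 by blast
    have K0: "K \<ge> 0" using gb[of 0] by simp
    then have N1: "N \<ge> 1" using N nz
      by (metis divide_nonneg_pos less_one not_less of_nat_0 of_nat_less_1_iff zero_less_abs_iff not_le)
    have "K < of_nat N * \<bar>F x\<bar>" using N nz by (simp add: divide_less_eq)
    also have "\<dots> \<le> of_nat N ^ k * \<bar>F x\<bar>"
    proof (rule mult_right_mono)
      have "(of_nat N::real) ^ 1 \<le> of_nat N ^ k" using N1 k by (intro power_increasing) auto
      then show "(of_nat N::real) \<le> of_nat N ^ k" by simp
    qed simp
    also have "\<dots> = \<bar>F (of_nat N * x)\<bar>" using hom by (simp add: abs_mult)
    finally show False using gb[of "of_nat N * x"] by simp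
  qed
qed

lemma linear_of_bounded:
  fixes f :: "real \<Rightarrow> real"
  assumes a: "additive_fun f" and d: "d > 0" and bnd: "\<And>t. \<bar>t\<bar> < d \<Longrightarrow> \<bar>f t\<bar> \<le> K"
  shows "f x = f 1 * x"
proof -
  define h where "h = (\<lambda>x. f x - f 1 * x)"
  have "h x = 0"
  proof (rule generic_zero[of 1 h])
    show "h (y + q) = h y" if "q \<in> \<rat>" for y q
      using add_rat1[OF a that] add_plus[OF a] unfolding h_def by (simp add: algebra_simps)
    show "h (of_nat N * y) = of_nat N ^ 1 * h y" for y N
      using add_nat[OF a] unfolding h_def by (simp add: algebra_simps)
    show "\<bar>h t\<bar> \<le> K + \<bar>f 1\<bar> * d" if "\<bar>t\<bar> < d" for t
    proof -
      have "\<bar>f 1 * t\<bar> \<le> \<bar>f 1\<bar> * d" using that by (simp add: abs_mult mult_left_mono)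
      then show ?thesis using bnd[OF that] unfolding h_def by linarith
    qed
  qed (use d in auto)
  then show ?thesis unfolding h_def by simp
qed

lemma id_of_bounded_sq:
  fixes g :: "real \<Rightarrow> real"
  assumes a: "additive_fun g" and g1: "g 1 = 1" and d: "d > 0"
    and bnd: "\<And>t. \<bar>t\<bar> < d \<Longrightarrow> \<bar>g (t^2) - (g t)^2\<bar> \<le> K"
  shows "g x = x"
proof -
  define \<psi> where "\<psi> = (\<lambda>x. g (x^2) - (g x)^2)"
  have gq: "q \<in> \<rat> \<Longrightarrow> g q = q" for q using add_rat1[OF a, of q] g1 by simp
  have z: "\<psi> y = 0" for y
  proof (rule generic_zero[of 2 \<psi>])
    show "\<psi> (y + q) = \<psi> y" if q: "q \<in> \<rat>" for y q
    proof -
      have "(y + q)^2 = y^2 + ((2*q) * y + q^2)" by (simp add: power2_eq_square algebra_simps)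
      then have "g ((y + q)^2) = g (y^2) + (2*q) * g y + q^2"
        using add_plus[OF a] add_rat[OF a, of "2*q" y] gq[of "q^2"] q by simp
      moreover have "g (y + q) = g y + q" using add_plus[OF a] gq q by simp
      ultimately show ?thesis unfolding \<psi>_def by (simp add: power2_eq_square algebra_simps)
    qed
    show "\<psi> (of_nat N * y) = of_nat N ^ 2 * \<psi> y" for y N
    proof -
      have "g ((of_nat N * y)^2) = g (of_nat (N^2) * y^2)" by (simp add: power_mult_distrib)
      also have "\<dots> = of_nat (N^2) * g (y^2)" by (rule add_nat[OF a])
      finally have "g ((of_nat N * y)^2) = of_nat N ^ 2 * g (y^2)" by simp
      moreover have "g (of_nat N * y) = of_nat N * g y" by (rule add_nat[OF a])
      ultimately show ?thesis unfolding \<psi>_def by (simp add: power_mult_distrib algebra_simps)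
    qed
  qed (use d bnd \<psi>_def in auto)
  have pos: "y \<ge> 0 \<Longrightarrow> g y \<ge> 0" for y
  proof -
    assume "y \<ge> 0"
    then have "y = (sqrt y)^2" by simp
    then have "g y = (g (sqrt y))^2" using z[of "sqrt y"] unfolding \<psi>_def by (metis eq_iff_diff_eq_0)
    then show ?thesis by simp
  qed
  show ?thesis
  proof (rule ccontr)
    assume ne: "g x \<noteq> x"
    show False
    proof (cases "g x > x")
      case True
      obtain q where q: "q \<in> \<rat>" "x < q" "q < g x" using Rats_dense_in_real True by blast
      have "g (q - x) = q - g x" using add_diff[OF a] gq q by simp
      then show False using pos[of "q - x"] q by simp
    next
      case False
      then have "g x < x" using ne by simp
      then obtain q where q: "q \<in> \<rat>" "g x < q" "q < x" using Rats_dense_in_real by blast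
      have "g (x - q) = g x - q" using add_diff[OF a] gq q by simp
      then show False using pos[of "x - q"] q by simp
    qed
  qed
qed



lemma steinhaus:
  fixes K :: "real set"
  assumes K: "compact K" "measure lebesgue K > 0"
  shows "\<exists>\<delta>>0. \<forall>T. finite T \<and> card T \<le> m \<and> (\<forall>t\<in>T. \<bar>t\<bar> < \<delta>) \<longrightarrow> (\<exists>x\<in>K. \<forall>t\<in>T. x + t \<in> K)"
proof -
  define e where "e = measure lebesgue K / (real m + 1)"
  have e: "e > 0" using K unfolding e_def by simp
  have Kl: "K \<in> lmeasurable" using K lmeasurable_compact by blast
  obtain U where U: "open U" "K \<subseteq> U" "(U - K) \<in> lmeasurable" "emeasure lebesgue (U - K) < ennreal e"
    using sets_lebesgue_outer_open[of K e] Kl e fmeasurableD by blast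
  have UKm: "measure lebesgue (U - K) < e"
    using U(3,4) e by (simp add: emeasure_eq_measure2 ennreal_less_iff)
  have UK: "U = K \<union> (U - K)" using U by blast
  have Ul: "U \<in> lmeasurable" using Kl U(3) UK by (metis fmeasurable.Un)
  have mU: "measure lebesgue U = measure lebesgue K + measure lebesgue (U - K)"
    using measure_Un2[OF Kl Ul] U(2) by (simp add: Un_absorb1)
  obtain d where d: "d > 0" "\<forall>x\<in>K. \<forall>y\<in>-U. d \<le> dist x y"
    using separate_compact_closed[of K "-U"] K U by auto
  have inU: "x \<in> K \<Longrightarrow> \<bar>t\<bar> < d \<Longrightarrow> x + t \<in> U" for x t
    using d(2) by (metis ComplI add_diff_cancel_left' dist_real_def not_less abs_minus_commute)
  have small: "measure lebesgue {x\<in>K. x + t \<notin> K} \<le> e" if t: "\<bar>t\<bar> < d" for t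
  proof -
    define Kt where "Kt = (+) (- t) ` K"
    have Kt_iff: "y \<in> Kt \<longleftrightarrow> y + t \<in> K" for y
      unfolding Kt_def by (auto simp: image_iff intro: bexI[of _ "y + t"])
    have Ktl: "Kt \<in> lmeasurable" unfolding Kt_def using Kl measurable_translation by blast
    have mKt: "measure lebesgue Kt = measure lebesgue K" unfolding Kt_def by (rule measure_translation)
    have sub: "K \<union> Kt \<subseteq> U"
    proof
      fix y assume "y \<in> K \<union> Kt"
      then show "y \<in> U"
      proof
        assume "y \<in> K" then show ?thesis using U by blast
      next
        assume "y \<in> Kt"
        then have "y + t \<in> K" using Kt_iff by blast
        from inU[OF this, of "-t"] t show ?thesis by simp
      qed
    qed
    have "measure lebesgue (Kt \<union> K) = measure lebesgue Kt + measure lebesgue (K - Kt)"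
      by (rule measure_Un2[OF Ktl Kl])
    moreover have "measure lebesgue (Kt \<union> K) \<le> measure lebesgue U"
      using sub Ul Ktl Kl by (intro measure_mono_fmeasurable) (auto simp: Un_commute fmeasurableD)
    ultimately have "measure lebesgue (K - Kt) \<le> e" using mU mKt UKm by linarith
    moreover have "K - Kt = {x\<in>K. x + t \<notin> K}" using Kt_iff by blast
    ultimately show ?thesis by simp
  qed
  show ?thesis
  proof (intro exI[of _ d] conjI allI impI)
    show "d > 0" by fact
    fix T :: "real set" assume T: "finite T \<and> card T \<le> m \<and> (\<forall>t\<in>T. \<bar>t\<bar> < d)"
    show "\<exists>x\<in>K. \<forall>t\<in>T. x + t \<in> K"
    proof (rule ccontr)
      assume "\<not> ?thesis"
      then have eq: "K = (\<Union>t\<in>T. {x\<in>K. x + t \<notin> K})" by blast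
      have meas: "{x\<in>K. x + t \<notin> K} \<in> sets lebesgue" for t
      proof -
        have "{x\<in>K. x + t \<notin> K} = K - (+) (- t) ` K"
          by (auto simp: image_iff) (metis add_diff_cancel_right')
        then show ?thesis using Kl measurable_translation[OF Kl, of "-t"] by (auto simp: fmeasurableD)
      qed
      have "measure lebesgue K \<le> (\<Sum>t\<in>T. measure lebesgue {x\<in>K. x + t \<notin> K})"
        using measure_UNION_le[of T "\<lambda>t. {x\<in>K. x + t \<notin> K}" lebesgue] T meas eq by simp
      also have "\<dots> \<le> (\<Sum>t\<in>T. e)" using small T by (intro sum_mono) auto
      also have "\<dots> = card T * e" by simp
      also have "\<dots> \<le> m * e" using T e by (intro mult_right_mono) auto
      also have "\<dots> < measure lebesgue K" using K unfolding e_def by (simp add: field_simps)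
      finally show False by simp
    qed
  qed
qed

lemma compact_inside:
  fixes A :: "real set"
  assumes A: "A \<in> sets lebesgue" "emeasure lebesgue A > 0"
  shows "\<exists>K. compact K \<and> K \<subseteq> A \<and> measure lebesgue K > 0"
proof -
  have "\<exists>k::nat. emeasure lebesgue (A \<inter> cball 0 (real k)) > 0"
  proof (rule ccontr)
    assume "\<not> ?thesis"
    then have "A \<inter> cball 0 (real k) \<in> null_sets lebesgue" for k
      using A by (auto intro!: null_setsI)
    then have "(\<Union>k. A \<inter> cball 0 (real k)) \<in> null_sets lebesgue" by blast
    moreover have "(\<Union>k. A \<inter> cball 0 (real k)) = A"
      by (auto simp: dist_real_def) (meson real_arch_simple)
    ultimately show False using A by (simp add: null_sets_def)
  qed
  then obtain k :: nat where k: "emeasure lebesgue (A \<inter> cball 0 (real k)) > 0" by blast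
  define S where "S = A \<inter> cball 0 (real k)"
  have Sl: "S \<in> lmeasurable" unfolding S_def
    using A by (intro bounded_set_imp_lmeasurable) auto
  have mS: "measure lebesgue S > 0" using k Sl unfolding S_def[symmetric]
    by (simp add: emeasure_eq_measure2)
  obtain T where T: "closed T" "T \<subseteq> S" "S - T \<in> lmeasurable"
      "emeasure lebesgue (S - T) < ennreal (measure lebesgue S / 2)"
    using sets_lebesgue_inner_closed[of S "measure lebesgue S / 2"] Sl mS fmeasurableD by auto
  have mST: "measure lebesgue (S - T) < measure lebesgue S / 2"
    using T(3,4) mS by (simp add: emeasure_eq_measure2 ennreal_less_iff)
  have Tm: "T \<in> sets lebesgue" using T(1) by (simp add: borel_closed)
  have "measure lebesgue S = measure lebesgue (T \<union> (S - T))" using T(2) by (simp add: Un_absorb1)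
  also have "\<dots> \<le> measure lebesgue T + measure lebesgue (S - T)"
    using Tm T(3) fmeasurableD by (intro measure_Un_le) auto
  finally have "measure lebesgue T > 0" using mST mS by linarith
  moreover have "compact T" using T(1,2) unfolding S_def
    by (metis bounded_cball bounded_subset compact_eq_bounded_closed inf_le2 order_trans)
  ultimately show ?thesis using T(2) unfolding S_def by blast
qed



lemma pos_bounded_to_compact:
  assumes "A \<in> sets lebesgue" "emeasure lebesgue A > 0" "\<forall>x\<in>A. \<bar>g x\<bar> \<le> M"
  shows "\<exists>K M. compact K \<and> measure lebesgue K > 0 \<and> (\<forall>x\<in>K. \<bar>(g::real\<Rightarrow>real) x\<bar> \<le> M)"
  using compact_inside[OF assms(1,2)] assms(3) by blast

lemma regular_bounded:
  assumes "locally_regular g UNIV"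
  shows "\<exists>K M. compact K \<and> measure lebesgue K > 0 \<and> (\<forall>x\<in>K. \<bar>(g::real\<Rightarrow>real) x\<bar> \<le> M)"
  using assms unfolding locally_regular_def
proof (elim disjE exE conjE bexE)
  fix A assume A: "A \<in> sets lebesgue" "emeasure lebesgue A > 0" "bounded (g ` A)"
  obtain M where "\<forall>y\<in>g ` A. norm y \<le> M" using A(3) bounded_iff by blast
  then show ?thesis using pos_bounded_to_compact[OF A(1,2), of g M] by auto
next
  fix x assume "continuous (at x within UNIV) g"
  then have "continuous (at x) g" by simp
  then obtain d where d: "d > 0" "\<forall>y. dist y x < d \<longrightarrow> dist (g y) (g x) < 1"
    unfolding continuous_at_eps_delta by (meson zero_less_one)
  define A where "A = {x - d/2 .. x + d/2}"
  have Am: "A \<in> sets lebesgue" unfolding A_def by simp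
  have "emeasure lebesgue A = emeasure lborel A" unfolding A_def
    by (simp add: emeasure_completion)
  also have "\<dots> = ennreal d" unfolding A_def using d by simp
  finally have Ap: "emeasure lebesgue A > 0" using d by simp
  have "\<forall>y\<in>A. \<bar>g y\<bar> \<le> \<bar>g x\<bar> + 1"
  proof
    fix y assume "y \<in> A"
    then have "dist y x < d" unfolding A_def dist_real_def using d by auto
    then have "\<bar>g y - g x\<bar> < 1" using d dist_real_def by metis
    then show "\<bar>g y\<bar> \<le> \<bar>g x\<bar> + 1" by linarith
  qed
  then show ?thesis using pos_bounded_to_compact[OF Am Ap] by blast
next
  fix A assume A: "A \<in> sets lebesgue" "emeasure lebesgue A > 0"
    and gm: "g \<in> borel_measurable (restrict_space lebesgue A)"
  let ?M = "restrict_space lebesgue A"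
  have sp: "space ?M = A" by (simp add: space_restrict_space)
  have Ak: "{y\<in>A. \<bar>g y\<bar> \<le> real k} \<in> sets lebesgue" for k
  proof -
    have "{y \<in> space ?M. \<bar>g y\<bar> \<le> real k} \<in> sets ?M" using gm by measurable
    then show ?thesis using sp A(1) by (simp add: sets_restrict_space_iff)
  qed
  have "\<exists>k::nat. emeasure lebesgue {y\<in>A. \<bar>g y\<bar> \<le> real k} > 0"
  proof (rule ccontr)
    assume "\<not> ?thesis"
    then have "{y\<in>A. \<bar>g y\<bar> \<le> real k} \<in> null_sets lebesgue" for k
      using Ak by (auto intro!: null_setsI)
    then have "(\<Union>k. {y\<in>A. \<bar>g y\<bar> \<le> real k}) \<in> null_sets lebesgue" by blast
    moreover have "(\<Union>k. {y\<in>A. \<bar>g y\<bar> \<le> real k}) = A"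
      by auto (meson real_arch_simple)
    ultimately show False using A by (simp add: null_sets_def)
  qed
  then obtain k :: nat where "emeasure lebesgue {y\<in>A. \<bar>g y\<bar> \<le> real k} > 0" by blast
  then show ?thesis using pos_bounded_to_compact[OF Ak, of k g "real k"] by blast
qed



lemma lagrange_coeff_bound:
  fixes z :: "nat \<Rightarrow> real"
  assumes inj: "inj_on z {..n}"
  shows "\<exists>C. \<forall>(p::real poly) M. degree p \<le> n \<longrightarrow> (\<forall>i\<le>n. \<bar>poly p (z i)\<bar> \<le> M) \<longrightarrow> \<bar>coeff p j\<bar> \<le> C * M"
proof -
  define L where "L i = (\<Prod>k\<in>{..n}-{i}. smult (1/(z i - z k)) [:- z k, 1:])" for i
  have Lval: "poly (L i) (z l) = (if l = i then 1 else 0)" if il: "i \<le> n" "l \<le> n" for i l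
  proof (cases "l = i")
    case True
    have "poly (L i) (z l) = (\<Prod>k\<in>{..n}-{i}. (z i - z k) / (z i - z k))"
      unfolding L_def poly_prod using True by (intro prod.cong refl) (simp add: diff_divide_distrib[symmetric])
    also have "\<dots> = (\<Prod>k\<in>{..n}-{i}. 1)"
    proof (rule prod.cong)
      fix k assume "k \<in> {..n}-{i}"
      then have "z i \<noteq> z k" using inj il by (auto dest: inj_onD)
      then show "(z i - z k) / (z i - z k) = 1" by simp
    qed simp
    finally show ?thesis using True by simp
  next
    case False
    have "poly (L i) (z l) = (\<Prod>k\<in>{..n}-{i}. (z l - z k) / (z i - z k))"
      unfolding L_def poly_prod by (intro prod.cong refl) (simp add: diff_divide_distrib[symmetric])
    also have "\<dots> = 0" using False il by (intro prod_zero) (auto intro!: bexI[of _ l])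
    finally show ?thesis using False by simp
  qed
  have Ldeg: "degree (L i) \<le> n" if "i \<le> n" for i
  proof -
    have "degree (L i) \<le> sum (degree \<circ> (\<lambda>k. smult (1/(z i - z k)) [:- z k, 1:])) ({..n}-{i})"
      unfolding L_def by (rule degree_prod_sum_le) simp
    also have "\<dots> \<le> sum (\<lambda>k. 1) ({..n}-{i})"
      by (intro sum_mono) (simp add: degree_smult_le order_trans[OF degree_smult_le])
    also have "\<dots> = n" using that by simp
    finally show ?thesis .
  qed
  define C where "C = (\<Sum>i\<le>n. \<bar>coeff (L i) j\<bar>)"
  show ?thesis
  proof (intro exI[of _ C] allI impI)
    fix p :: "real poly" and M assume dp: "degree p \<le> n" and pm: "\<forall>i\<le>n. \<bar>poly p (z i)\<bar> \<le> M"
    define Q where "Q = (\<Sum>i\<le>n. smult (poly p (z i)) (L i))"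
    have dQ: "degree Q \<le> n" unfolding Q_def
      by (intro degree_sum_le) (auto intro: order_trans[OF degree_smult_le] Ldeg)
    have "p = Q"
    proof (rule poly_eqI_degree[of "z ` {..n}"])
      fix x assume "x \<in> z ` {..n}"
      then obtain l where l: "l \<le> n" "x = z l" by auto
      have "poly Q x = (\<Sum>i\<le>n. poly p (z i) * (if l = i then 1 else 0))"
        unfolding Q_def poly_sum using l Lval by simp
      also have "\<dots> = poly p x" using l by (simp add: if_distrib cong: if_cong)
      finally show "poly p x = poly Q x" by simp
    next
      have "card (z ` {..n}) = Suc n" using inj by (simp add: card_image)
      then show "degree p < card (z ` {..n})" "degree Q < card (z ` {..n})" using dp dQ by auto
    qed
    then have "coeff p j = coeff Q j" by simp
    also have "coeff Q j = (\<Sum>i\<le>n. poly p (z i) * coeff (L i) j)"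
      unfolding Q_def by (simp add: coeff_sum)
    finally have "coeff p j = (\<Sum>i\<le>n. poly p (z i) * coeff (L i) j)" .
    then have "\<bar>coeff p j\<bar> \<le> (\<Sum>i\<le>n. \<bar>poly p (z i)\<bar> * \<bar>coeff (L i) j\<bar>)"
      by (simp add: abs_mult[symmetric] sum_abs)
    also have "\<dots> \<le> (\<Sum>i\<le>n. M * \<bar>coeff (L i) j\<bar>)"
      using pm by (intro sum_mono mult_right_mono) auto
    also have "\<dots> = C * M" unfolding C_def by (simp add: sum_distrib_left mult.commute)
    finally show "\<bar>coeff p j\<bar> \<le> C * M" .
  qed
qed



definition Bc :: "nat \<Rightarrow> (real\<Rightarrow>real) \<Rightarrow> real \<Rightarrow> nat \<Rightarrow> real" where
  "Bc n f x j = of_nat (n choose j) * (f (x^(n-j)) - (f 1)^j * (f x)^(n-j))"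

definition Pp :: "nat \<Rightarrow> (real\<Rightarrow>real) \<Rightarrow> real \<Rightarrow> real poly" where
  "Pp n f x = (\<Sum>j\<le>n. monom (Bc n f x j) j)"

lemma Pp_deg: "degree (Pp n f x) \<le> n"
  unfolding Pp_def by (intro degree_sum_le) (auto intro: order_trans[OF degree_monom_le])

lemma Pp_coeff: "j \<le> n \<Longrightarrow> coeff (Pp n f x) j = Bc n f x j"
  unfolding Pp_def by (simp add: coeff_sum coeff_monom)

lemma Pp_poly:
  assumes a: "additive_fun f" and q: "q \<in> \<rat>"
  shows "poly (Pp n f x) q = f ((x+q)^n) - (f (x+q))^n"
proof -
  have "f ((x+q)^n) = f (\<Sum>k\<le>n. of_nat (n choose k) * q^k * x^(n-k))"
    using binomial_ring[of q x n] by (simp add: add.commute)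
  also have "\<dots> = (\<Sum>k\<le>n. f ((of_nat (n choose k) * q^k) * x^(n-k)))"
    by (rule add_sum[OF a]) simp
  also have "\<dots> = (\<Sum>k\<le>n. (of_nat (n choose k) * q^k) * f (x^(n-k)))"
    using q by (intro sum.cong refl add_rat[OF a]) auto
  finally have e1: "f ((x+q)^n) = (\<Sum>k\<le>n. (of_nat (n choose k) * q^k) * f (x^(n-k)))" .
  have "f (x+q) = q * f 1 + f x" using add_plus[OF a] add_rat1[OF a q] by simp
  then have e2: "(f (x+q))^n = (\<Sum>k\<le>n. of_nat (n choose k) * (q * f 1)^k * (f x)^(n-k))"
    using binomial_ring[of "q * f 1" "f x" n] by simp
  have "poly (Pp n f x) q = (\<Sum>k\<le>n. Bc n f x k * q^k)"
    unfolding Pp_def by (simp add: poly_sum poly_monom)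
  also have "\<dots> = (\<Sum>k\<le>n. (of_nat (n choose k) * q^k) * f (x^(n-k)) - of_nat (n choose k) * (q * f 1)^k * (f x)^(n-k))"
    unfolding Bc_def by (intro sum.cong refl) (simp add: algebra_simps power_mult_distrib)
  also have "\<dots> = f ((x+q)^n) - (f (x+q))^n"
    unfolding e1 e2 by (simp add: sum_subtractf)
  finally show ?thesis .
qed



lemma sq_second_diff:
  assumes a: "additive_fun g"
  shows "(g ((x+2*h)^2) - (g (x+2*h))^2) - 2 * (g ((x+h)^2) - (g (x+h))^2) + (g (x^2) - (g x)^2)
         = 2 * (g (h^2) - (g h)^2)"
proof -
  have r2: "(2::real) \<in> \<rat>" and r4: "(4::real) \<in> \<rat>" by simp_all
  have "(x+2*h)^2 = x^2 + (4*(x*h) + 4*h^2)" by (simp add: power2_eq_square algebra_simps)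
  then have e1: "g ((x+2*h)^2) = g (x^2) + 4 * g (x*h) + 4 * g (h^2)"
    using add_plus[OF a] add_rat[OF a r4] by simp
  have "(x+h)^2 = x^2 + (2*(x*h) + h^2)" by (simp add: power2_eq_square algebra_simps)
  then have e2: "g ((x+h)^2) = g (x^2) + 2 * g (x*h) + g (h^2)"
    using add_plus[OF a] add_rat[OF a r2] by simp
  have e3: "g (x+2*h) = g x + 2 * g h" using add_plus[OF a] add_rat[OF a r2] by simp
  have e4: "g (x+h) = g x + g h" using add_plus[OF a] by simp
  show ?thesis unfolding e1 e2 e3 e4 by (simp add: power2_eq_square algebra_simps)
qed

lemma abs_one_of_power:
  fixes c :: real assumes "c ^ m = 1" "m \<ge> 1" shows "\<bar>c\<bar> = 1"
proof -
  have h: "\<bar>c\<bar> ^ m = 1" using assms by (metis power_abs abs_one)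
  show ?thesis
  proof (rule ccontr)
    assume "\<bar>c\<bar> \<noteq> 1"
    then consider "\<bar>c\<bar> < 1" | "\<bar>c\<bar> > 1" by linarith
    then show False
    proof cases
      case 1 then have "\<bar>c\<bar> ^ m < 1" using assms(2) by (subst power_less_one_iff) auto
      then show False using h by simp
    next
      case 2 then have "\<bar>c\<bar> ^ m > 1" using assms(2) by (intro one_less_power) auto
      then show False using h by simp
    qed
  qed
qed



theorem mainTheorem6:
  fixes n :: nat and f :: "real \<Rightarrow> real"
  assumes "n \<ge> 1" and "n \<noteq> 1"
    and "additive_fun f"
    and "locally_regular (\<lambda>x. f (x ^ n) - (f x) ^ n) UNIV"
  shows "\<forall>x. f x = f 1 * x"
proof -
  have a: "additive_fun f" by fact
  have n2: "n \<ge> 2" using assms(1,2) by linarith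
  define \<phi> where "\<phi> = (\<lambda>x. f (x ^ n) - (f x) ^ n)"
  obtain K M where K: "compact K" "measure lebesgue K > 0" and KM: "\<forall>x\<in>K. \<bar>\<phi> x\<bar> \<le> M"
    using regular_bounded[OF assms(4)] unfolding \<phi>_def by blast
  obtain \<delta> where \<delta>: "\<delta> > 0" and st: "\<forall>T. finite T \<and> card T \<le> 3*(n+1) \<and> (\<forall>t\<in>T. \<bar>t\<bar> < \<delta>) \<longrightarrow> (\<exists>x\<in>K. \<forall>t\<in>T. x + t \<in> K)"
    using steinhaus[OF K, of "3*(n+1)"] by blast
  obtain r where r: "r \<in> \<rat>" "0 < r" "r < \<delta> / (3 * (real n + 1))"
    using Rats_dense_in_real[of 0 "\<delta> / (3 * (real n + 1))"] \<delta> by auto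
  define z where "z i = real i * r" for i
  have zQ: "z i \<in> \<rat>" for i unfolding z_def using r by simp
  have zs: "0 \<le> z i \<and> z i < \<delta>/3" if "i \<le> n" for i
  proof -
    have "z i \<le> real n * r" unfolding z_def using that r by (simp add: mult_right_mono)
    also have "\<dots> < (real n + 1) * (\<delta> / (3 * (real n + 1)))"
      using r by (intro mult_strict_mono') auto
    also have "\<dots> = \<delta>/3"
    proof -
      have "real n + 1 > 0" by simp
      then show ?thesis by (simp add: field_simps)
    qed
    finally show ?thesis unfolding z_def using r by simp
  qed
  have inj: "inj_on z {..n}" unfolding z_def using r by (intro inj_onI) simp
  have bnd: "\<exists>C. \<forall>y. (\<forall>i\<le>n. y + z i \<in> K) \<longrightarrow> \<bar>Bc n f y j\<bar> \<le> C" if j: "j \<le> n" for j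
  proof -
    obtain C where C: "\<forall>(p::real poly) M'. degree p \<le> n \<longrightarrow> (\<forall>i\<le>n. \<bar>poly p (z i)\<bar> \<le> M') \<longrightarrow> \<bar>coeff p j\<bar> \<le> C * M'"
      using lagrange_coeff_bound[OF inj, of j] by blast
    show ?thesis
    proof (intro exI[of _ "C * M"] allI impI)
      fix y assume y: "\<forall>i\<le>n. y + z i \<in> K"
      have "\<forall>i\<le>n. \<bar>poly (Pp n f y) (z i)\<bar> \<le> M"
        using Pp_poly[OF a zQ] y KM unfolding \<phi>_def by simp
      then have "\<bar>coeff (Pp n f y) j\<bar> \<le> C * M" using C Pp_deg by blast
      then show "\<bar>Bc n f y j\<bar> \<le> C * M" using Pp_coeff[OF j] by simp
    qed
  qed
  have pts: "\<exists>x. \<forall>k<3. \<forall>i\<le>n. x + real k * h + z i \<in> K" if h: "\<bar>h\<bar> < \<delta>/3" for h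
  proof -
    define T where "T = (\<lambda>(i,k). z i + real k * h) ` ({..n} \<times> {..<3::nat})"
    have "finite T" unfolding T_def by simp
    moreover have "card T \<le> 3*(n+1)"
    proof -
      have "card T \<le> card ({..n} \<times> {..<3::nat})" unfolding T_def by (rule card_image_le) simp
      then show ?thesis by (simp add: card_cartesian_product)
    qed
    moreover have "\<forall>t\<in>T. \<bar>t\<bar> < \<delta>"
    proof
      fix t assume "t \<in> T"
      then obtain i k where ik: "i \<le> n" "k < (3::nat)" "t = z i + real k * h" unfolding T_def by auto
      have "\<bar>real k * h\<bar> \<le> 2 * \<bar>h\<bar>" using ik(2) by (simp add: abs_mult mult_right_mono)
      then show "\<bar>t\<bar> < \<delta>" using zs[OF ik(1)] ik(3) h by linarith
    qed
    ultimately obtain x where "\<forall>t\<in>T. x + t \<in> K" using st by blast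
    then have "\<forall>k<3. \<forall>i\<le>n. x + (z i + real k * h) \<in> K" unfolding T_def by auto
    then show ?thesis by (auto simp: algebra_simps)
  qed
  show ?thesis
  proof (cases "(f 1)^(n-1) = 1")
    case False
    obtain C where C: "\<forall>y. (\<forall>i\<le>n. y + z i \<in> K) \<longrightarrow> \<bar>Bc n f y (n-1)\<bar> \<le> C" using bnd[of "n-1"] by auto
    have Bform: "Bc n f y (n-1) = real n * (1 - f 1 ^ (n-1)) * f y" for y
    proof -
      have "n choose (n-1) = n choose 1" using n2 by (subst binomial_symmetric) auto
      moreover have "n - (n-1) = 1" using n2 by simp
      ultimately show ?thesis unfolding Bc_def by (simp add: algebra_simps)
    qed
    define D where "D = real n * \<bar>1 - f 1 ^ (n-1)\<bar>"
    have D: "D > 0" unfolding D_def using False n2 by simp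
    have fb: "\<bar>f y\<bar> \<le> C / D" if "\<forall>i\<le>n. y + z i \<in> K" for y
    proof -
      have "\<bar>Bc n f y (n-1)\<bar> \<le> C" using C that by blast
      moreover have "\<bar>Bc n f y (n-1)\<bar> = D * \<bar>f y\<bar>" unfolding Bform D_def by (simp add: abs_mult)
      ultimately have "D * \<bar>f y\<bar> \<le> C" by simp
      then show ?thesis using D by (simp add: field_simps mult.commute)
    qed
    have "f x = f 1 * x" for x
    proof (rule linear_of_bounded[OF a, of "\<delta>/3" "2 * (C / D)"])
      fix h :: real assume h: "\<bar>h\<bar> < \<delta>/3"
      obtain x where x: "\<forall>k<3. \<forall>i\<le>n. x + real k * h + z i \<in> K" using pts[OF h] by blast
      have b0: "\<bar>f x\<bar> \<le> C / D" using fb x[rule_format, of 0] by simp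
      have b1: "\<bar>f (x + h)\<bar> \<le> C / D" using fb x[rule_format, of 1] by simp
      have "f h = f (x + h) - f x" using add_plus[OF a] by simp
      then show "\<bar>f h\<bar> \<le> 2 * (C / D)" using b0 b1 by linarith
    qed (use \<delta> in simp)
    then show ?thesis by blast
  next
    case True
    define c where "c = f 1"
    have ac: "\<bar>c\<bar> = 1" using abs_one_of_power[of c "n-1"] True n2 unfolding c_def by simp
    have c2: "c * c = 1" using ac by (metis abs_mult_self_eq mult_cancel_right1)
    have "c ^ (n-1) = c ^ (n-2) * c" using n2 by (metis Suc_diff_Suc Suc_1 diff_Suc_1 less_le_trans lessI power_Suc2 numeral_2_eq_2)
    then have "c ^ (n-2) * c = 1" using True unfolding c_def by simp
    then have cn2: "c ^ (n-2) = c" using c2 by (metis mult.assoc mult.right_neutral)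
    define g where "g y = c * f y" for y
    have ag: "additive_fun g" using a unfolding additive_fun_def g_def by (simp add: algebra_simps)
    have g1: "g 1 = 1" unfolding g_def c_def[symmetric] using c2 by simp
    obtain C where C: "\<forall>y. (\<forall>i\<le>n. y + z i \<in> K) \<longrightarrow> \<bar>Bc n f y (n-2)\<bar> \<le> C" using bnd[of "n-2"] by auto
    have Bform: "Bc n f y (n-2) = real (n choose 2) * (f (y^2) - c * (f y)^2)" for y
    proof -
      have "n choose (n-2) = n choose 2" using n2 by (subst binomial_symmetric) auto
      moreover have "n - (n-2) = 2" using n2 by simp
      ultimately show ?thesis unfolding Bc_def c_def[symmetric] cn2 by simp
    qed
    have nc: "real (n choose 2) \<ge> 1" using zero_less_binomial[of 2 n] n2 by (simp del: zero_less_binomial_iff)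
    have psiform: "g (y^2) - (g y)^2 = c * (f (y^2) - c * (f y)^2)" for y
      unfolding g_def by (simp add: power2_eq_square algebra_simps)
    have gb: "\<bar>g (y^2) - (g y)^2\<bar> \<le> C" if "\<forall>i\<le>n. y + z i \<in> K" for y
    proof -
      have "\<bar>f (y^2) - c * (f y)^2\<bar> \<le> real (n choose 2) * \<bar>f (y^2) - c * (f y)^2\<bar>"
        using nc by (simp add: mult_le_cancel_right1)
      also have "\<dots> = \<bar>Bc n f y (n-2)\<bar>" unfolding Bform by (simp add: abs_mult)
      also have "\<dots> \<le> C" using C that by blast
      finally show ?thesis unfolding psiform using ac by (simp add: abs_mult)
    qed
    have gid: "g y = y" for y
    proof (rule id_of_bounded_sq[OF ag g1, of "\<delta>/3" "2 * C"])
      fix h :: real assume h: "\<bar>h\<bar> < \<delta>/3"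
      obtain x where x: "\<forall>k<3. \<forall>i\<le>n. x + real k * h + z i \<in> K" using pts[OF h] by blast
      have b0: "\<bar>g (x^2) - (g x)^2\<bar> \<le> C" using gb x[rule_format, of 0] by simp
      have b1: "\<bar>g ((x+h)^2) - (g (x+h))^2\<bar> \<le> C" using gb x[rule_format, of 1] by simp
      have b2: "\<bar>g ((x+2*h)^2) - (g (x+2*h))^2\<bar> \<le> C" using gb x[rule_format, of 2] by simp
      show "\<bar>g (h^2) - (g h)^2\<bar> \<le> 2 * C" using sq_second_diff[OF ag, of x h] b0 b1 b2 by (smt (verit))
    qed (use \<delta> in simp)
    have "f y = f 1 * y" for y
    proof -
      have "f y = c * g y" unfolding g_def using c2 by (simp add: mult.assoc[symmetric])
      then show ?thesis using gid unfolding c_def by simp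
    qed
    then show ?thesis by blast
  qed
qed


end
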